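(* Let $k\neq 1$ be real, and put the real Hesse curve $\mathcal{C}(k)_{\mathbb{R}}=\{x^3+y^3+z^3=3k\,xyz\}\subset\mathbb{P}^2(\mathbb{R})$ into the standard normal form $y^2=x^3+ax+b$ ($a,b\in\mathbb{R}$) by a real projective transformation. Then $b<0$ if and only if $1-\sqrt3<k<1+\sqrt3$; $b=0$ if and only if $k=1\pm\sqrt3$; and $b>0$ otherwise.
   Context: The affine equation $y^2=x^3+ax+b$ denotes the curve $-y^2z+x^3+axz^2+bz^3=0$. Real projective transformations between standard normal forms fixing $(0:1:0)$ replace $(a,b)$ by $(t^4a,t^6b)$ with $t$ real non-zero, so the sign of $b$ is well defined. *)

theory Defs
  imports "HOL-Analysis.Analysis"
begin

text \<open>Homogeneous coordinates (x:y:z) are v$1, v$2, v$3 for v :: real^3.\<close>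

definition hesse_form :: "real \<Rightarrow> real^3 \<Rightarrow> real" where
  "hesse_form k v = (v$1)^3 + (v$2)^3 + (v$3)^3 - 3 * k * (v$1) * (v$2) * (v$3)"

text \<open>The standard normal form y^2 = x^3 + a x + b, i.e. -y^2 z + x^3 + a x z^2 + b z^3 = 0.\<close>
definition weierstrass_form :: "real \<Rightarrow> real \<Rightarrow> real^3 \<Rightarrow> real" where
  "weierstrass_form a b v = (v$1)^3 - (v$2)^2 * (v$3) + a * (v$1) * (v$3)^2 + b * (v$3)^3"

text \<open>A real projective transformation (invertible 3x3 matrix A) puts the curve F = 0
  into the curve G = 0 when G composed with A is a nonzero multiple of F.\<close>
definition proj_transforms :: "real^3^3 \<Rightarrow> (real^3 \<Rightarrow> real) \<Rightarrow> (real^3 \<Rightarrow> real) \<Rightarrow> bool" where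
  "proj_transforms A F G \<longleftrightarrow> invertible A \<and> (\<exists>c. c \<noteq> 0 \<and> (\<forall>v. G (A *v v) = c * F v))"

end

theory Submission imports Defs begin
definition pol :: "(real^3 \<Rightarrow> real) \<Rightarrow> real^3 \<Rightarrow> real^3 \<Rightarrow> real^3 \<Rightarrow> real" where
  "pol F u v w = F (u+v+w) - F (u+v) - F (u+w) - F (v+w) + F u + F v + F w"

definition hm :: "(real^3 \<Rightarrow> real) \<Rightarrow> real^3 \<Rightarrow> real^3^3" where
  "hm F x = (\<chi> i j. pol F (axis i 1) (axis j 1) x)"

definition tri :: "(real^3 \<Rightarrow> real) \<Rightarrow> bool" where
  "tri F \<longleftrightarrow> (\<forall>u v w. pol F u v w = (\<Sum>k\<in>UNIV. \<Sum>l\<in>UNIV. u$k * v$l * pol F (axis k 1) (axis l 1) w))"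

lemma pol_transfer:
  assumes "\<forall>v. G (A *v v) = c * F v"
  shows "c * pol F u v w = pol G (A *v u) (A *v v) (A *v w)"
  unfolding pol_def matrix_vector_right_distrib[symmetric] assms[rule_format]
  by (simp add: algebra_simps)

lemma det_scale3: "det (c *\<^sub>R (M::real^3^3)) = c^3 * det M"
  unfolding det_3 by (simp only: vector_scaleR_component real_scaleR_def) (simp add: power3_eq_cube algebra_simps)

lemma hm_transfer:
  assumes "\<forall>v. G (A *v v) = c * F v" "tri G"
  shows "c *\<^sub>R hm F x = transpose A ** hm G (A *v x) ** A"
proof -
  have e: "(A *v axis i 1) $ k = A$k$i" for i k
    by (simp add: matrix_vector_mult_def axis_def if_distrib cong: if_cong)
  show ?thesis
    unfolding vec_eq_iff
  proof (intro allI)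
    fix i j
    have "(c *\<^sub>R hm F x)$i$j = pol G (A *v axis i 1) (A *v axis j 1) (A *v x)"
      using pol_transfer[OF assms(1)] by (simp add: hm_def)
    also have "\<dots> = (\<Sum>k\<in>UNIV. \<Sum>l\<in>UNIV. A$k$i * A$l$j * hm G (A *v x) $k$l)"
      unfolding assms(2)[unfolded tri_def, rule_format, of "A *v axis i 1" "A *v axis j 1" "A *v x"]
      by (simp only: e hm_def vec_lambda_beta)
    also have "\<dots> = (transpose A ** hm G (A *v x) ** A)$i$j"
      by (simp add: matrix_matrix_mult_def transpose_def sum_3 algebra_simps)
    finally show "(c *\<^sub>R hm F x)$i$j = (transpose A ** hm G (A *v x) ** A)$i$j" .
  qed
qed

lemma det_transfer:
  assumes "\<forall>v. G (A *v v) = c * F v" "tri G"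
  shows "c^3 * det (hm F x) = (det A)^2 * det (hm G (A *v x))"
proof -
  have "det (c *\<^sub>R hm F x) = det (transpose A ** hm G (A *v x) ** A)"
    using hm_transfer[OF assms] by simp
  thus ?thesis by (simp add: det_scale3 det_mul power2_eq_square)
qed

definition hG :: "real \<Rightarrow> real \<Rightarrow> real^3 \<Rightarrow> real" where
  "hG a b v = 8*a^2*(v$3)^3 - 72*b*(v$1)*(v$3)^2 - 24*(v$1)*(v$2)^2 - 24*a*(v$1)^2*(v$3)"

definition hF :: "real \<Rightarrow> real^3 \<Rightarrow> real" where
  "hF k v = -54*k^2*((v$1)^3+(v$2)^3+(v$3)^3) + (216-54*k^3)*(v$1)*(v$2)*(v$3)"

lemmas cs = vector_add_component axis_def pol_def hm_def sum_3 det_3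

lemma L1: "det (hm (weierstrass_form a b) v) = hG a b v"
  by (simp add: cs weierstrass_form_def hG_def) (simp add: algebra_simps power2_eq_square power3_eq_cube)

lemma L2: "det (hm (hesse_form k) v) = hF k v"
  by (simp add: cs hesse_form_def hF_def) (simp add: algebra_simps power2_eq_square power3_eq_cube)

lemma L3: "tri (weierstrass_form a b)"
  unfolding tri_def by (simp add: cs weierstrass_form_def) (simp add: algebra_simps power2_eq_square power3_eq_cube)

lemma L4: "tri (hG a b)"
  unfolding tri_def by (simp add: cs hG_def) (simp add: algebra_simps power2_eq_square power3_eq_cube)

lemma L5: "det (hm (hG a b) v) = 110592*a^2 * weierstrass_form a b v - 13824*b * hG a b v"
  by (simp add: cs hG_def weierstrass_form_def) (simp add: algebra_simps power2_eq_square power3_eq_cube)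

lemma det3_sym: "det (vector [vector [p*x, m*z, m*y], vector [m*z, p*y, m*x], vector [m*y, m*x, p*z]] :: real^3^3)
   = p^3*x*y*z + 2*m^3*x*y*z - p*m^2*(x^3+y^3+z^3)"
  by (simp add: det_3 vector_3) (simp add: algebra_simps power2_eq_square power3_eq_cube)

lemma hm_hF: "hm (hF k) v = vector [vector [(-324*k^2)*(v$1), (216-54*k^3)*(v$3), (216-54*k^3)*(v$2)],
   vector [(216-54*k^3)*(v$3), (-324*k^2)*(v$2), (216-54*k^3)*(v$1)],
   vector [(216-54*k^3)*(v$2), (216-54*k^3)*(v$1), (-324*k^2)*(v$3)]]"
  unfolding vec_eq_iff forall_3
  by (simp add: vector_3 cs hF_def) (simp add: algebra_simps power2_eq_square power3_eq_cube)

lemma L6: "det (hm (hF k) v) = (20155392*k^2 + 5038848*k^5 + 314928*k^8) * hesse_form k v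
   - 11664*(k^6-20*k^3-8) * hF k v"
proof -
  define p where "p = -324*k^2"
  define m where "m = (216-54*k^3)"
  define S where "S = (v$1)^3+(v$2)^3+(v$3)^3"
  define X where "X = (v$1)*(v$2)*(v$3)"
  define A where "A = (20155392*k^2 + 5038848*k^5 + 314928*k^8)"
  define B where "B = - 11664*(k^6-20*k^3-8)"
  have c1: "- p*m^2 = A - 54*k^2 * B"
    unfolding p_def m_def A_def B_def by algebra
  have c2: "p^3 + 2*m^3 = -3*k*A + B * m"
    unfolding p_def m_def A_def B_def by algebra
  have hf: "hF k v = -54*k^2*S + m*X" unfolding hF_def S_def X_def m_def by (simp add: algebra_simps)
  have he: "hesse_form k v = S - 3*k*X" unfolding hesse_form_def S_def X_def by (simp add: algebra_simps)
  have "det (hm (hF k) v) = (p^3 + 2*m^3)*X + (- p*m^2)*S"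
    unfolding hm_hF p_def[symmetric] m_def[symmetric] det3_sym S_def X_def by (simp add: algebra_simps)
  also have "\<dots> = A * (S - 3*k*X) + B * (-54*k^2*S + m*X)"
    unfolding c1 c2 by (simp add: algebra_simps)
  also have "\<dots> = A * hesse_form k v + B * hF k v"
    unfolding hf he ..
  finally show ?thesis unfolding A_def B_def by (simp add: algebra_simps)
qed

theorem lemma6p4:
  fixes k a b :: real and A :: "real^3^3"
  assumes "k \<noteq> 1"
    and "proj_transforms A (hesse_form k) (weierstrass_form a b)"
  shows "(b < 0 \<longleftrightarrow> 1 - sqrt 3 < k \<and> k < 1 + sqrt 3)
       \<and> (b = 0 \<longleftrightarrow> k = 1 - sqrt 3 \<or> k = 1 + sqrt 3)
       \<and> (b > 0 \<longleftrightarrow> k < 1 - sqrt 3 \<or> 1 + sqrt 3 < k)"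
proof -
  obtain c where c0: "c \<noteq> 0" and h: "\<forall>v. weierstrass_form a b (A *v v) = c * hesse_form k v"
    and inv: "invertible A"
    using assms(2) unfolding proj_transforms_def by blast
  define d where "d = det A"
  have d0: "d \<noteq> 0" using inv invertible_det_nz d_def by auto
  define c1 where "c1 = c^3 / d^2"
  have c10: "c1 \<noteq> 0" using c0 d0 by (simp add: c1_def)
  have h1: "\<forall>v. hG a b (A *v v) = c1 * hF k v"
  proof
    fix v
    have "c^3 * hF k v = d^2 * hG a b (A *v v)"
      using det_transfer[OF h L3, of v] by (simp add: L1 L2 d_def)
    thus "hG a b (A *v v) = c1 * hF k v" using d0 by (simp add: c1_def field_simps)
  qed
  define al where "al = (20155392*k^2 + 5038848*k^5 + 314928*k^8)"
  define be where "be = - 11664*(k^6-20*k^3-8)"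
  have key: "c1^3 * (al * hesse_form k x + be * hF k x)
     = d^2 * (110592*a^2 * (c * hesse_form k x) - 13824*b * (c1 * hF k x))" for x
  proof -
    have "c1^3 * det (hm (hF k) x) = d^2 * det (hm (hG a b) (A *v x))"
      using det_transfer[OF h1 L4, of x] by (simp add: d_def)
    thus ?thesis unfolding L5 L6 h[rule_format] h1[rule_format] al_def be_def by (simp add: algebra_simps)
  qed
  define P where "P = c1^3 * al - d^2 * 110592*a^2 * c"
  define Q where "Q = c1^3 * be + d^2 * 13824 * b * c1"
  have key2: "P * hesse_form k x + Q * hF k x = 0" for x
    using key[of x] unfolding P_def Q_def by (simp add: algebra_simps)
  have e1: "P - 54*k^2 * Q = 0"
    using key2[of "vector [1,0,0]"] by (simp add: hesse_form_def hF_def vector_3)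
  have e2: "P * (3 - 3*k) + Q * (216 - 162*k^2 - 54*k^3) = 0"
    using key2[of "vector [1,1,1]"] by (simp add: hesse_form_def hF_def vector_3 algebra_simps)
  have "Q * (216 * (1 - k^3)) = 0"
  proof -
    have "P = 54*k^2*Q" using e1 by simp
    with e2 show ?thesis by (simp add: algebra_simps power2_eq_square power3_eq_cube)
  qed
  moreover have "1 - k^3 \<noteq> 0"
  proof -
    have "1 - k^3 = (1 - k) * ((k + 1/2)^2 + 3/4)"
      by (simp add: algebra_simps power2_eq_square power3_eq_cube)
    moreover have "(k + 1/2)^2 + 3/4 > 0" using zero_le_power2[of "k+1/2"] by linarith
    ultimately show ?thesis using assms(1) by simp
  qed
  ultimately have "Q = 0" by simp
  hence "c1 * (c1^2 * be + d^2 * 13824 * b) = 0" unfolding Q_def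
    by (simp add: power2_eq_square power3_eq_cube algebra_simps)
  hence "c1^2 * be + d^2 * 13824 * b = 0" using c10 by simp
  hence "c1^2 * be = -(d^2 * 13824 * b)" by linarith
  define C where "C = c1^2 * 11664 / (d^2 * 13824)"
  have Cpos: "C > 0" unfolding C_def using c10 d0 by simp
  hence eqb: "b = C * (k^6-20*k^3-8)"
    using d0 \<open>c1^2 * be = -(d^2 * 13824 * b)\<close> unfolding be_def C_def by (simp add: field_simps)
  define q where "q = k^4+2*k^3+6*k^2-4*k+4"
  have qpos: "q > 0"
  proof -
    have "q = (k^2+k)^2 + 5*(k-2/5)^2 + 16/5"
      unfolding q_def by (simp add: power2_eq_square algebra_simps power4_eq_xxxx power3_eq_cube)
    thus ?thesis using zero_le_power2[of "k^2+k"] zero_le_power2[of "k-2/5"] by linarith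
  qed
  define w where "w = C * q"
  have wpos: "w > 0" unfolding w_def using Cpos qpos by simp
  have s3: "sqrt 3 * sqrt 3 = 3" by simp
  have f1: "(k - (1 + sqrt 3)) * (k - (1 - sqrt 3)) = k^2 - 2*k - 2"
    using s3 by (simp add: algebra_simps power2_eq_square)
  have f2: "k^6-20*k^3-8 = (k^2-2*k-2)*q"
    unfolding q_def by algebra
  have bw: "b = w * ((k - (1 + sqrt 3)) * (k - (1 - sqrt 3)))"
    unfolding f1 eqb f2 w_def by (simp add: ac_simps)
  have lt: "1 - sqrt 3 < 1 + sqrt 3" by simp
  have s0: "sqrt 3 > 0" by simp
  show ?thesis unfolding bw using wpos s0
    by (auto simp add: mult_less_0_iff zero_less_mult_iff; linarith)
qed

end
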